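(* Let $k\ge 2$, $n=2^k$, and run Jakobsson's pebble-update procedure. Then the pebbles with initial labels $1,\dots,k-1$ are each eventually discarded, and they are discarded in the reverse order of their initial labels: first the pebble with label $k-1$, then the one with label $k-2$, and so on, down to the pebble with label $1$.
   Context: Jakobsson's pebble-update procedure (hash-chain preimage traversal). Fix $k\ge 1$ and $n=2^k$. There are $k$ pebbles, identified by their initial label $j\in\{1,\dots,k\}$; the pebble with label $k$ sits at the seed of the hash chain. Pebble $j$ has two fixed constants $S_j=3\cdot 2^j$ (start increment) and $D_j=2^{j+1}$ (destination increment), and two integer fields $\mathrm{Position}$ and $\mathrm{Destination}$ (which may be set to $+\infty$). Initially $\mathrm{Position}=\mathrm{Destination}=2^j$ for pebble $j$, and a counter $c$ equals $0$. The pebbles are kept sorted by $\mathrm{Position}$, and "the first pebble" means the pebble with the smallest $\mathrm{Position}$. One step: (i) if $c=n$, stop; otherwise $c\leftarrow c+1$; (ii) for every pebble with $\mathrm{Position}\ne\mathrm{Destination}$, set $\mathrm{Position}\leftarrow\mathrm{Position}-2$; (iii) if $c$ is even, the first pebble (say with initial label $j$) makes a backward move: $\mathrm{Position}\leftarrow \mathrm{Position}+S_j$, $\mathrm{Destination}\leftarrow\mathrm{Destination}+D_j$; if the new Destination exceeds $n$, both fields are set to $+\infty$ and the pebble is said to be discarded; then the pebbles are re-sorted by $\mathrm{Position}$. (Each pebble also stores a hash-chain value, which does not influence the evolution of the Position and Destination fields.) *)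

theory Defs
  imports Main
begin

text \<open>Pebbles are identified by their initial
label j in {1..k}. Position/Destination are values in int extended by +infinity,
represented as int option with None = +infinity.\<close>

record pstate =
  cnt :: nat
  pos :: "nat \<Rightarrow> int option"
  dst :: "nat \<Rightarrow> int option"

definition S_inc :: "nat \<Rightarrow> int" where "S_inc j = 3 * 2 ^ j"
definition D_inc :: "nat \<Rightarrow> int" where "D_inc j = 2 ^ (j + 1)"

definition init_state :: "nat \<Rightarrow> pstate" where
  "init_state k = \<lparr> cnt = 0,
     pos = (\<lambda>j. Some (2 ^ j)),
     dst = (\<lambda>j. Some (2 ^ j)) \<rparr>"

text \<open>The first pebble: the label among 1..k with the smallest (finite) Position;
ties (which never occur) are broken by smallest label. If every Position is +infinity
there is no pebble with finite Position, and the backward move changes nothing.\<close>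
definition is_first :: "nat \<Rightarrow> pstate \<Rightarrow> nat \<Rightarrow> bool" where
  "is_first k s j \<longleftrightarrow> j \<in> {1..k} \<and> pos s j \<noteq> None \<and>
     (\<forall>i\<in>{1..k}. pos s i \<noteq> None \<longrightarrow> the (pos s j) \<le> the (pos s i))"

definition first_pebble :: "nat \<Rightarrow> pstate \<Rightarrow> nat" where
  "first_pebble k s = (LEAST j. is_first k s j)"

definition move_all :: "pstate \<Rightarrow> pstate" where
  "move_all s = s \<lparr> pos := (\<lambda>j. if pos s j \<noteq> dst s j
                                 then map_option (\<lambda>x. x - 2) (pos s j) else pos s j) \<rparr>"

definition backward :: "nat \<Rightarrow> nat \<Rightarrow> pstate \<Rightarrow> pstate" where
  "backward n j s =
     (let p' = map_option (\<lambda>x. x + S_inc j) (pos s j);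
          d' = map_option (\<lambda>x. x + D_inc j) (dst s j)
      in if (case d' of None \<Rightarrow> True | Some d \<Rightarrow> d > int n)
         then s \<lparr> pos := (pos s)(j := None), dst := (dst s)(j := None) \<rparr>
         else s \<lparr> pos := (pos s)(j := p'), dst := (dst s)(j := d') \<rparr>)"

definition step :: "nat \<Rightarrow> pstate \<Rightarrow> pstate" where
  "step k s =
     (if cnt s = 2 ^ k then s
      else let s1 = move_all (s \<lparr> cnt := Suc (cnt s) \<rparr>)
           in if even (cnt s1) \<and> (\<exists>j. is_first k s1 j)
              then backward (2 ^ k) (first_pebble k s1) s1
              else s1)"

definition run :: "nat \<Rightarrow> nat \<Rightarrow> pstate" where
  "run k t = (step k ^^ t) (init_state k)"

definition discarded_at :: "nat \<Rightarrow> nat \<Rightarrow> nat \<Rightarrow> bool" where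
  "discarded_at k j t \<longleftrightarrow> 1 \<le> t \<and> t \<le> 2 ^ k \<and>
     dst (run k (t - 1)) j \<noteq> None \<and> dst (run k t) j = None"

end

theory Submission imports Defs begin

definition NN :: "nat \<Rightarrow> nat \<Rightarrow> nat" where
  "NN j c = 2^j * (2 * ((c + 2^j) div 2^(j+1)) + 1)"

lemma NN_decomp:
  fixes j c :: nat shows
  "NN j c = 2*2^j*((c + 2^j) div (2*2^j)) + 2^j" 
  by (simp add: NN_def algebra_simps)
lemma NN_decomp2:
  fixes j c :: nat shows
  "c + 2^j = 2*2^j*((c + 2^j) div (2*2^j)) + (c + 2^j) mod (2*2^j)"
  by (metis div_mult_mod_eq mult.commute)

lemma NN_gt: "c < NN j c"
proof -
  have "(c + 2^j) mod (2*2^j) < 2*2^j" by simp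
  thus ?thesis using NN_decomp[of j c] NN_decomp2[of c j] by linarith
qed

lemma NN_Suc_iff: "Suc c = NN j c \<longleftrightarrow> (Suc c + 2^j) mod (2*2^j) = 0"
proof -
  define q :: nat where "q = 2^j"
  define a where "a = (c + q) div (2*q)"
  define b where "b = (c + q) mod (2*q)"
  have q: "q > 0" by (simp add: q_def)
  have e1: "NN j c = 2*q*a + q" using NN_decomp[of j c] by (simp add: q_def a_def)
  have e2: "c + q = 2*q*a + b" using NN_decomp2[of c j] by (simp add: a_def b_def q_def)
  have b: "b < 2*q" using q by (simp add: b_def)
  have e3: "Suc c + q = 2*q*a + (b+1)" using e2 by simp
  show ?thesis
  proof
    assume "Suc c = NN j c"
    then have "b + 1 = 2*q" using e1 e2 by linarith
    then show "(Suc c + 2^j) mod (2*2^j) = 0" using e3 q_def by simp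
  next
    assume h: "(Suc c + 2^j) mod (2*2^j) = 0"
    have "(b+1 + a*(2*q)) mod (2*q) = (b+1) mod (2*q)" by (rule mod_mult_self1)
    then have "(b+1) mod (2*q) = 0" using h e3 q_def by (simp add: mult.commute add.commute)
    moreover have "b+1 \<le> 2*q" using b by simp
    ultimately have "b+1 = 2*q"
    proof -
      assume m: "(b+1) mod (2*q) = 0" and l: "b+1 \<le> 2*q"
      show ?thesis
      proof (rule ccontr)
        assume "b+1 \<noteq> 2*q"
        then have "b+1 < 2*q" using l by simp
        then have "(b+1) mod (2*q) = b+1" by simp
        then show False using m by simp
      qed
    qed
    then show "Suc c = NN j c" using e1 e2 by linarith
  qed
qed

lemma NN_Suc_ne: assumes "Suc c \<noteq> NN j c" shows "NN j (Suc c) = NN j c"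
proof -
  define q :: nat where "q = 2^j"
  define a where "a = (c + q) div (2*q)"
  define b where "b = (c + q) mod (2*q)"
  have q: "q > 0" by (simp add: q_def)
  have e1: "NN j c = 2*q*a + q" using NN_decomp[of j c] by (simp add: q_def a_def)
  have e2: "c + q = 2*q*a + b" using NN_decomp2[of c j] by (simp add: a_def b_def q_def)
  have b: "b < 2*q" using q by (simp add: b_def)
  have "b + 1 \<noteq> 2*q" using assms e1 e2 by linarith
  then have b1: "b + 1 < 2*q" using b by linarith
  have e3: "Suc c + q = 2*q*a + (b+1)" using e2 by simp
  have "(Suc c + q) div (2*q) = (b+1 + a*(2*q)) div (2*q)" using e3 by (simp only: ac_simps)
  also have "\<dots> = a + (b+1) div (2*q)" using q by (simp only: div_mult_self1)
  also have "\<dots> = a" using b1 by simp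
  finally have "(Suc c + q) div (2*q) = a" .
  then show ?thesis using e1 NN_decomp[of j "Suc c"] q_def by simp
qed

lemma NN_Suc_eq: assumes "Suc c = NN j c" shows "NN j (Suc c) = NN j c + 2^(j+1)"
proof -
  define q :: nat where "q = 2^j"
  define a where "a = (c + q) div (2*q)"
  define b where "b = (c + q) mod (2*q)"
  have q: "q > 0" by (simp add: q_def)
  have e1: "NN j c = 2*q*a + q" using NN_decomp[of j c] by (simp add: q_def a_def)
  have e2: "c + q = 2*q*a + b" using NN_decomp2[of c j] by (simp add: a_def b_def q_def)
  have "b + 1 = 2*q" using assms e1 e2 by linarith
  then have e3: "Suc c + q = 2*q*(a+1)" using e2 by simp
  have "(Suc c + q) div (2*q) = a+1" using e3 q by simp
  then show ?thesis using e1 NN_decomp[of j "Suc c"] q_def by simp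
qed

lemma NN_even: "j \<ge> 1 \<Longrightarrow> even (NN j c)"
  by (simp add: NN_def)

lemma two_pow_odd: "(m::nat) > 0 \<Longrightarrow> \<exists>v t. m = 2^v * (2*t+1)"
proof (induction m rule: less_induct)
  case (less m)
  show ?case
  proof (cases "even m")
    case True
    then obtain h where h: "m = 2*h" by blast
    with less have "h < m" "h > 0" by auto
    with less.IH obtain v t where "h = 2^v*(2*t+1)" by blast
    with h have "m = 2^(Suc v)*(2*t+1)" by simp
    then show ?thesis by blast
  next
    case False
    then obtain t where "m = 2*t+1" using oddE by blast
    then have "m = 2^0*(2*t+1)" by simp
    then show ?thesis by blast
  qed
qed

lemma NN_exists: assumes "even (Suc c)" "Suc c \<le> 2^k"
  shows "\<exists>j\<in>{1..k}. NN j c = Suc c"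
proof -
  obtain v t where m: "Suc c = 2^v*(2*t+1)" using two_pow_odd[of "Suc c"] by auto
  have v1: "v \<ge> 1" using assms(1) m by (cases v) auto
  have "2^v \<le> Suc c" using m by (metis le_add2 mult.right_neutral mult_le_mono2 Suc_eq_plus1 mult_Suc_right)
  then have "(2::nat)^v \<le> 2^k" using assms(2) by linarith
  then have vk: "v \<le> k" by simp
  have "Suc c + 2^v = (2*2^v)*(t+1)" using m by (simp add: algebra_simps)
  then have "(Suc c + 2^v) mod (2*2^v) = 0" by simp
  then have "Suc c = NN v c" using NN_Suc_iff by simp
  then show ?thesis using v1 vk by auto
qed

lemma NN_unique: assumes "NN i c = Suc c" "NN j c = Suc c" shows "i = j"
proof (rule ccontr)
  have di: "2^(i+1) dvd (Suc c + 2^i)" "2^(j+1) dvd (Suc c + 2^j)"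
    using NN_Suc_iff[of c i] NN_Suc_iff[of c j] assms by (auto simp: mod_eq_0_iff_dvd)
  have gen: "False" if "a < b" "2^(a+1) dvd (Suc c + 2^a)" "2^(b+1) dvd (Suc c + 2^b)" for a b :: nat
  proof -
    have "(2::nat)^(a+1) dvd 2^b" by (rule le_imp_power_dvd) (use that(1) in simp)
    have "(2::nat)^(a+1) dvd 2^(b+1)" by (rule le_imp_power_dvd) (use that(1) in simp)
    then have "2^(a+1) dvd Suc c + 2^b" using that(3) dvd_trans by blast
    then have "2^(a+1) dvd Suc c" using \<open>(2::nat)^(a+1) dvd 2^b\<close> dvd_add_left_iff by blast
    then have "2^(a+1) dvd (2::nat)^a" using that(2) dvd_add_right_iff by blast
    then show False by (simp add: power_le_dvd)
  qed
  assume "i \<noteq> j"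
  then show False using gen di by (metis linorder_neqE_nat)
qed

definition pv :: "nat \<Rightarrow> nat \<Rightarrow> int" where
  "pv j c = max (int (NN j c)) (3*int (NN j c) - 3*2^j - 2*int c)"

definition pinv :: "nat \<Rightarrow> nat \<Rightarrow> pstate \<Rightarrow> bool" where
  "pinv k c s \<longleftrightarrow> cnt s = c \<and> (\<forall>j\<in>{1..k}.
     (NN j c \<le> 2^k \<longrightarrow> pos s j = Some (pv j c) \<and> dst s j = Some (int (NN j c))) \<and>
     (\<not> NN j c \<le> 2^k \<longrightarrow> pos s j = None \<and> dst s j = None))"

lemma pinv0: "pinv k 0 (init_state k)"
proof -
  have "NN j 0 = 2^j" for j by (simp add: NN_def)
  then show ?thesis
    by (auto simp: pinv_def init_state_def pv_def)
qed

lemma move_step: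
  assumes inv: "pinv k c s" and j: "j \<in> {1..k}"
  defines "s1 \<equiv> move_all (s\<lparr>cnt := Suc c\<rparr>)"
  shows "NN j c \<le> 2^k \<Longrightarrow> pos s1 j = Some (max (int (NN j c)) (3*int (NN j c) - 3*2^j - 2*int (Suc c)))
            \<and> dst s1 j = Some (int (NN j c))"
    and "\<not> NN j c \<le> 2^k \<Longrightarrow> pos s1 j = None \<and> dst s1 j = None"
    and "cnt s1 = Suc c"
proof -
  show "cnt s1 = Suc c" by (simp add: s1_def move_all_def)
  show "\<not> NN j c \<le> 2^k \<Longrightarrow> pos s1 j = None \<and> dst s1 j = None"
    using inv j by (simp add: s1_def move_all_def pinv_def)
  assume al: "NN j c \<le> 2^k"
  have ps: "pos s j = Some (pv j c)" and ds: "dst s j = Some (int (NN j c))"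
    using inv j al by (auto simp: pinv_def)
  define N where "N = int (NN j c)"
  have j1: "j \<ge> 1" using j by simp
  obtain N2 where N2: "NN j c = 2*N2" using NN_even[OF j1] by blast
  obtain q2 :: int where q2: "2^j = 2*q2" using j1 by (metis One_nat_def Suc_pred' less_eq_Suc_le power_Suc zero_less_iff_neq_zero not_one_le_zero)
  show "pos s1 j = Some (max (int (NN j c)) (3*int (NN j c) - 3*2^j - 2*int (Suc c))) \<and> dst s1 j = Some (int (NN j c))"
  proof (cases "pv j c = N")
    case True
    then have "3*N - 3*2^j - 2*int c \<le> N" by (simp add: pv_def N_def)
    then show ?thesis using True ps ds by (simp add: s1_def move_all_def N_def pv_def)
  next
    case False
    then have gt: "3*N - 3*2^j - 2*int c > N" and pv: "pv j c = 3*N - 3*2^j - 2*int c"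
      by (auto simp: pv_def N_def)
    have "2*N - 3*2^j - 2*int c \<ge> 2"
    proof -
      have "2*N - 3*2^j - 2*int c = 2*(2*int N2 - 3*q2 - int c)" using N2 q2 by (simp add: N_def)
      moreover have "2*N - 3*2^j - 2*int c > 0" using gt by simp
      ultimately show ?thesis
      proof -
        have "X = 2*Y \<Longrightarrow> X > 0 \<Longrightarrow> X \<ge> 2" for X Y :: int by presburger
        then show "2*N - 3*2^j - 2*int c = 2*(2*int N2 - 3*q2 - int c) \<Longrightarrow> 2*N - 3*2^j - 2*int c > 0 \<Longrightarrow> ?thesis" by blast
      qed
    qed
    then show ?thesis using False ps ds pv by (simp add: s1_def move_all_def N_def pv_def)
  qed
qed

lemma inv_step:
  assumes inv: "pinv k c s" and lt: "c < 2^k"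
  shows "pinv k (Suc c) (step k s)"
proof -
  define s1 where "s1 = move_all (s\<lparr>cnt := Suc c\<rparr>)"
  have cs: "cnt s = c" using inv by (simp add: pinv_def)
  have c1: "cnt s1 = Suc c" by (simp add: s1_def move_all_def)
  have st: "step k s = (if even (Suc c) \<and> (\<exists>j. is_first k s1 j)
              then backward (2 ^ k) (first_pebble k s1) s1 else s1)"
    using lt c1 by (simp add: step_def cs Let_def flip: s1_def)
  note M = move_step[OF inv, folded s1_def]
  show ?thesis
  proof (cases "even (Suc c)")
    case False
    have NNeq: "NN j (Suc c) = NN j c" if "j \<in> {1..k}" for j
      using NN_Suc_ne NN_even[of j c] that False by (metis atLeastAtMost_iff)
    have "pinv k (Suc c) s1"
      unfolding pinv_def
    proof (intro conjI ballI)
      fix j assume j: "j \<in> {1..k}"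
      show "NN j (Suc c) \<le> 2^k \<longrightarrow> pos s1 j = Some (pv j (Suc c)) \<and> dst s1 j = Some (int (NN j (Suc c)))"
        using M(1)[OF j] NNeq[OF j] by (simp add: pv_def)
      show "\<not> NN j (Suc c) \<le> 2^k \<longrightarrow> pos s1 j = None \<and> dst s1 j = None"
        using M(2)[OF j] NNeq[OF j] by simp
    qed (rule c1)
    then show ?thesis using st False by simp
  next
    case True
    obtain j0 where j0: "j0 \<in> {1..k}" "NN j0 c = Suc c"
      using NN_exists[OF True] lt by (metis Suc_leI)
    have al0: "NN j0 c \<le> 2^k" using j0 lt by simp
    have p0: "pos s1 j0 = Some (int (Suc c))" and d0: "dst s1 j0 = Some (int (Suc c))"
      using M(1)[OF j0(1) al0] j0(2) by auto
    have others: "NN i c \<noteq> Suc c" if "i \<noteq> j0" for i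
      using NN_unique[of i c j0] j0(2) that by auto
    have bigger: "the (pos s1 i) > int (Suc c)" if "i \<in> {1..k}" "i \<noteq> j0" "pos s1 i \<noteq> None" for i
    proof -
      have al: "NN i c \<le> 2^k" using M(2)[OF that(1)] that(3) by blast
      have "NN i c > Suc c" using NN_gt[of c i] others[OF that(2)] by simp
      then show ?thesis using M(1)[OF that(1) al] by auto
    qed
    have isf: "is_first k s1 j0"
      unfolding is_first_def
    proof (intro conjI ballI impI)
      fix i assume i: "i \<in> {1..k}" "pos s1 i \<noteq> None"
      show "the (pos s1 j0) \<le> the (pos s1 i)"
      proof (cases "i = j0")
        case False then show ?thesis using bigger[OF i(1) False i(2)] p0 by simp
      qed simp
    qed (use j0(1) p0 in auto)
    have fp: "first_pebble k s1 = j0"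
      unfolding first_pebble_def
    proof (rule Least_equality[where P="is_first k s1", OF isf])
      fix y assume y: "is_first k s1 y"
      have "y = j0"
      proof (rule ccontr)
        assume ne: "y \<noteq> j0"
        have "y \<in> {1..k}" "pos s1 y \<noteq> None" using y by (auto simp: is_first_def)
        then have "the (pos s1 y) > int (Suc c)" using bigger ne by blast
        moreover have "the (pos s1 y) \<le> the (pos s1 j0)" using y j0(1) p0 by (auto simp: is_first_def)
        ultimately show False using p0 by simp
      qed
      then show "j0 \<le> y" by simp
    qed
    have st2: "step k s = backward (2^k) j0 s1" using st True isf fp by auto
    have NN0: "NN j0 (Suc c) = Suc c + 2^(j0+1)" using NN_Suc_eq[of c j0] j0(2) by simp
    have NNo: "NN i (Suc c) = NN i c" if "i \<noteq> j0" for i using NN_Suc_ne others[OF that] by metis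
    have key: "int (Suc c) + D_inc j0 = int (NN j0 (Suc c))" using NN0 by (simp add: D_inc_def)
    show ?thesis
    proof (cases "int (Suc c) + D_inc j0 > int (2^k)")
      case dead: True
      have b: "backward (2^k) j0 s1 = s1\<lparr>pos := (pos s1)(j0 := None), dst := (dst s1)(j0 := None)\<rparr>"
        using dead p0 d0 by (simp add: backward_def Let_def)
      have nd: "\<not> NN j0 (Suc c) \<le> 2^k" using dead key by (metis of_nat_le_iff not_less)
      show ?thesis unfolding st2 b pinv_def
      proof (intro conjI ballI)
        fix j assume j: "j \<in> {1..k}"
        show "NN j (Suc c) \<le> 2^k \<longrightarrow> pos (s1\<lparr>pos := (pos s1)(j0 := None), dst := (dst s1)(j0 := None)\<rparr>) j = Some (pv j (Suc c)) \<and> dst (s1\<lparr>pos := (pos s1)(j0 := None), dst := (dst s1)(j0 := None)\<rparr>) j = Some (int (NN j (Suc c)))"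
          using M(1)[OF j] NNo[of j] nd by (cases "j = j0") (auto simp: pv_def)
        show "\<not> NN j (Suc c) \<le> 2^k \<longrightarrow> pos (s1\<lparr>pos := (pos s1)(j0 := None), dst := (dst s1)(j0 := None)\<rparr>) j = None \<and> dst (s1\<lparr>pos := (pos s1)(j0 := None), dst := (dst s1)(j0 := None)\<rparr>) j = None"
          using M(2)[OF j] NNo[of j] by (cases "j = j0") auto
      qed (simp add: c1)
    next
      case alive: False
      define p' where "p' = int (Suc c) + S_inc j0"
      define d' where "d' = int (Suc c) + D_inc j0"
      have b: "backward (2^k) j0 s1 = s1\<lparr>pos := (pos s1)(j0 := Some p'), dst := (dst s1)(j0 := Some d')\<rparr>"
        using alive p0 d0 by (simp add: backward_def Let_def p'_def d'_def)
      have nd: "NN j0 (Suc c) \<le> 2^k" using alive key by (metis of_nat_le_iff not_less)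
      have dd: "d' = int (NN j0 (Suc c))" using NN0 by (simp add: d'_def D_inc_def)
      have pp: "p' = pv j0 (Suc c)" using NN0 by (simp add: p'_def pv_def S_inc_def)
      show ?thesis unfolding st2 b pinv_def
      proof (intro conjI ballI)
        fix j assume j: "j \<in> {1..k}"
        show "NN j (Suc c) \<le> 2^k \<longrightarrow> pos (s1\<lparr>pos := (pos s1)(j0 := Some p'), dst := (dst s1)(j0 := Some d')\<rparr>) j = Some (pv j (Suc c)) \<and> dst (s1\<lparr>pos := (pos s1)(j0 := Some p'), dst := (dst s1)(j0 := Some d')\<rparr>) j = Some (int (NN j (Suc c)))"
          using M(1)[OF j] NNo[of j] dd pp by (cases "j = j0") (auto simp: pv_def)
        show "\<not> NN j (Suc c) \<le> 2^k \<longrightarrow> pos (s1\<lparr>pos := (pos s1)(j0 := Some p'), dst := (dst s1)(j0 := Some d')\<rparr>) j = None \<and> dst (s1\<lparr>pos := (pos s1)(j0 := Some p'), dst := (dst s1)(j0 := Some d')\<rparr>) j = None"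
          using M(2)[OF j] NNo[of j] nd by (cases "j = j0") auto
      qed (simp add: c1)
    qed
  qed
qed

lemma inv_run: "c \<le> 2^k \<Longrightarrow> pinv k c (run k c)"
proof (induction c)
  case 0 then show ?case by (simp add: run_def pinv0)
next
  case (Suc c)
  then have "pinv k c (run k c)" by simp
  then have "pinv k (Suc c) (step k (run k c))" using inv_step Suc.prems by simp
  then show ?case by (simp add: run_def)
qed

lemma disc: assumes j: "1 \<le> j" "j < k" shows "discarded_at k j (2^k - 2^j)"
proof -
  define T :: nat where "T = 2^k - 2^j"
  have pjk: "(2::nat)^j < 2^k" using j by simp
  have T1: "T \<ge> 1" using pjk unfolding T_def by linarith
  have Tn: "T \<le> 2^k" by (simp add: T_def)
  have dv: "(2::nat)^(j+1) dvd 2^k" by (rule le_imp_power_dvd) (use j in simp)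
  have TT: "T + 2^j = 2^k" using pjk T_def by simp
  have m0: "(Suc (T-1) + 2^j) mod (2*2^j) = 0"
  proof -
    have "Suc (T-1) + 2^j = 2^k" using TT T1 by linarith
    then show ?thesis using dv by (simp add: mod_eq_0_iff_dvd)
  qed
  have e: "Suc (T-1) = NN j (T-1)" using NN_Suc_iff[THEN iffD2, OF m0] .
  have a1: "NN j (T-1) \<le> 2^k" using e T1 Tn by linarith
  have a2: "\<not> NN j T \<le> 2^k"
  proof -
    have "NN j (Suc (T-1)) = NN j (T-1) + 2^(j+1)" using NN_Suc_eq[OF e] .
    moreover have "Suc (T-1) = T" using T1 by linarith
    ultimately have "NN j T = T + 2*2^j" using e by simp
    moreover have "(2::nat)^j > 0" by simp
    ultimately show ?thesis using TT by linarith
  qed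
  have jr: "j \<in> {1..k}" using j by simp
  have i1: "pinv k (T-1) (run k (T-1))" using inv_run[of "T-1" k] Tn by linarith
  have i2: "pinv k T (run k T)" using inv_run[of T k] Tn by blast
  have "dst (run k (T-1)) j \<noteq> None"
    using bspec[OF conjunct2[OF i1[unfolded pinv_def]] jr] a1 by fastforce
  moreover have "dst (run k T) j = None"
    using bspec[OF conjunct2[OF i2[unfolded pinv_def]] jr] a2 by fastforce
  ultimately have "discarded_at k j T" unfolding discarded_at_def using T1 Tn by blast
  then show ?thesis by (simp only: T_def)
qed

theorem fact12:
  fixes k :: nat
  assumes "k \<ge> 2"
  shows "\<exists>T :: nat \<Rightarrow> nat.
           (\<forall>j\<in>{1..k-1}. discarded_at k j (T j)) \<and>
           (\<forall>i j. 1 \<le> i \<and> i < j \<and> j \<le> k - 1 \<longrightarrow> T j < T i)"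
proof (intro exI[of _ "\<lambda>j. 2^k - 2^j"] conjI allI ballI impI)
  fix j assume "j \<in> {1..k-1}"
  then show "discarded_at k j (2^k - 2^j)" using disc assms by auto
next
  fix i j :: nat assume h: "1 \<le> i \<and> i < j \<and> j \<le> k - 1"
  have A: "(2::nat)^i < 2^j" using h by simp
  have "j < k" using h assms by linarith
  then have B: "(2::nat)^j < 2^k" by simp
  show "(2::nat)^k - 2^j < 2^k - 2^i" using A B by linarith
qed

end
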